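(* Let $\mathcal{A}$ be a znz-pattern with $m\ge2$ nonzero diagonal entries such that $D(\mathcal{A})$ has no $k$-cycles with $2\le k\le m$. Then $\mathcal{A}$ is not potentially nilpotent over any field $\mathbb{F}$.
   Context: A znz-pattern is an $n\times n$ matrix with entries in $\{*,0\}$; a realization over $\mathbb{F}$ is a matrix in $M_n(\mathbb{F})$ whose nonzero entries are exactly at the $*$ positions; $\mathcal{A}$ is potentially nilpotent over $\mathbb{F}$ if some realization is nilpotent. The digraph $D(\mathcal{A})$ has vertex set $\{1,\ldots,n\}$ and an arc $(i,j)$ whenever $\mathcal{A}_{i,j}=*$. A $k$-cycle is a sequence of $k$ distinct vertices $i_1,\ldots,i_k$ with arcs $(i_1,i_2),\ldots,(i_{k-1},i_k),(i_k,i_1)$. *)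

theory Defs
  imports "Jordan_Normal_Form.Matrix"
begin

text \<open>A znz-pattern of size n is represented by a predicate P on index pairs:
  P i j holds iff entry (i,j) is a star (nonzero); indices range over 0..<n.\<close>

definition realization :: "nat \<Rightarrow> (nat \<Rightarrow> nat \<Rightarrow> bool) \<Rightarrow> 'a::field mat \<Rightarrow> bool" where
  "realization n P A \<longleftrightarrow> A \<in> carrier_mat n n \<and>
     (\<forall>i<n. \<forall>j<n. (A $$ (i, j) \<noteq> 0 \<longleftrightarrow> P i j))"

definition nilpotent_mat :: "nat \<Rightarrow> 'a::field mat \<Rightarrow> bool" where
  "nilpotent_mat n A \<longleftrightarrow> A \<in> carrier_mat n n \<and> (\<exists>k. A ^\<^sub>m k = 0\<^sub>m n n)"

definition potentially_nilpotent :: "'a::field itself \<Rightarrow> nat \<Rightarrow> (nat \<Rightarrow> nat \<Rightarrow> bool) \<Rightarrow> bool" where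
  "potentially_nilpotent _ n P \<longleftrightarrow> (\<exists>A::'a mat. realization n P A \<and> nilpotent_mat n A)"

definition has_k_cycle :: "nat \<Rightarrow> (nat \<Rightarrow> nat \<Rightarrow> bool) \<Rightarrow> nat \<Rightarrow> bool" where
  "has_k_cycle n P k \<longleftrightarrow> (\<exists>vs. length vs = k \<and> k \<ge> 1 \<and> distinct vs \<and> set vs \<subseteq> {..<n} \<and>
      (\<forall>i<k. P (vs ! i) (vs ! ((i + 1) mod k))))"

definition num_nonzero_diag :: "nat \<Rightarrow> (nat \<Rightarrow> nat \<Rightarrow> bool) \<Rightarrow> nat" where
  "num_nonzero_diag n P = card {i. i < n \<and> P i i}"

end

theory Submission
  imports Defs "Jordan_Normal_Form.Char_Poly" "HOL-Combinatorics.Orbits"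
begin


lemma const_hom: "comm_ring_hom (\<lambda>a::'a::comm_ring_1. [:a:])"
  by unfold_locales (auto simp: one_pCons)

lemma char_poly_nilp:
  fixes A :: "'a::field mat"
  assumes A: "A \<in> carrier_mat n n" and nil: "A ^\<^sub>m k = 0\<^sub>m n n"
  shows "char_poly A = monom 1 n"
proof -
  interpret c: comm_ring_hom "\<lambda>a::'a. [:a:]" by (rule const_hom)
  define M where "M = map_mat (\<lambda>a. [:a:]) A"
  have Mc: "M \<in> carrier_mat n n" using A by (simp add: M_def)
  define X :: "'a poly mat" where "X = [:0,1:] \<cdot>\<^sub>m 1\<^sub>m n"
  have Xc: "X \<in> carrier_mat n n" by (simp add: X_def)
  have CM: "char_poly_matrix A = X - M"
    unfolding char_poly_matrix_def X_def M_def using A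
    by (intro eq_matI) auto
  define Q where "Q = (\<lambda>j. rec_nat (0\<^sub>m n n) (\<lambda>i R. [:0,1:] \<cdot>\<^sub>m R + M ^\<^sub>m i) j)"
  have Q0: "Q 0 = 0\<^sub>m n n" and QS: "\<And>i. Q (Suc i) = [:0,1:] \<cdot>\<^sub>m Q i + M ^\<^sub>m i" by (simp_all add: Q_def)
  have Qc: "Q j \<in> carrier_mat n n" for j by (induct j) (auto simp: Q0 QS Mc)
  have key: "Q j * (X - M) = [:0,1:]^j \<cdot>\<^sub>m 1\<^sub>m n - M ^\<^sub>m j" for j
  proof (induct j)
    case 0 then show ?case using Xc Mc by (intro eq_matI) (auto simp: Q0)
  next
    case (Suc j)
    have Pc: "M ^\<^sub>m j \<in> carrier_mat n n" using Mc by simp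
    have "Q (Suc j) * (X - M) = ([:0,1:] \<cdot>\<^sub>m Q j) * (X - M) + M ^\<^sub>m j * (X - M)"
      unfolding QS by (rule add_mult_distrib_mat[of _ n n]) (use Qc Pc Xc Mc in \<open>auto simp: minus_carrier_mat\<close>)
    also have "([:0,1:] \<cdot>\<^sub>m Q j) * (X - M) = [:0,1:] \<cdot>\<^sub>m (Q j * (X - M))"
      by (rule mult_smult_assoc_mat[OF Qc, of _ n]) (use Xc Mc in \<open>simp add: minus_carrier_mat\<close>)
    also have "M ^\<^sub>m j * (X - M) = M ^\<^sub>m j * X - M ^\<^sub>m j * M"
      by (rule mult_minus_distrib_mat[OF Pc Xc Mc])
    also have "M ^\<^sub>m j * X = [:0,1:] \<cdot>\<^sub>m M ^\<^sub>m j"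
      unfolding X_def using Pc by (subst mult_smult_distrib[of _ n n _ n]) auto
    also have "M ^\<^sub>m j * M = M ^\<^sub>m (Suc j)" by simp
    finally show ?case unfolding Suc
      using Pc Mc by (intro eq_matI) (auto simp: right_diff_distrib)
  qed
  have Mk: "M ^\<^sub>m k = 0\<^sub>m n n"
    unfolding M_def using c.mat_hom_pow[OF A, of k, symmetric] nil by (auto intro!: eq_matI)
  have "det (X - M) * det (Q k) = det ([:0,1:]^k \<cdot>\<^sub>m 1\<^sub>m n)"
  proof -
    have z: "[:0,1:]^k \<cdot>\<^sub>m 1\<^sub>m n - 0\<^sub>m n n = [:0,1:]^k \<cdot>\<^sub>m (1\<^sub>m n :: 'a poly mat)" by (intro eq_matI) auto
    have "det (Q k * (X - M)) = det (Q k) * det (X - M)"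
      by (rule det_mult[OF Qc]) (use Xc Mc in \<open>simp add: minus_carrier_mat\<close>)
    moreover have "Q k * (X - M) = [:0,1:]^k \<cdot>\<^sub>m 1\<^sub>m n" using key[of k] z by (simp only: Mk)
    ultimately show ?thesis by (simp add: mult.commute)
  qed
  also have "\<dots> = monom 1 (k * n)" by (simp add: monom_altdef power_mult)
  finally have eq: "char_poly A * det (Q k) = monom 1 (k*n)" using CM by (simp add: char_poly_def)
  have dm: "degree (char_poly A) = n \<and> coeff (char_poly A) n = 1" by (rule degree_monic_char_poly[OF A])
  have p0: "char_poly A \<noteq> 0" using dm by (metis coeff_0 zero_neq_one)
  have mon: "monom (1::'a) (k*n) = [:-0,1:]^(k*n)" by (simp add: monom_altdef)
  have nz: "char_poly A * det (Q k) \<noteq> 0" unfolding eq by (simp add: monom_eq_0_iff)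
  hence q0: "det (Q k) \<noteq> 0" by (metis mult_zero_right)
  have "order 0 (char_poly A) + order 0 (det (Q k)) = k * n"
  proof -
    have o1: "order 0 (char_poly A * det (Q k)) = order 0 (char_poly A) + order 0 (det (Q k))" by (rule order_mult[OF nz])
    have o2: "order 0 (char_poly A * det (Q k)) = k*n" unfolding eq mon by (rule order_power_n_n)
    show ?thesis using o1 o2 by linarith
  qed
  moreover have "degree (char_poly A) + degree (det (Q k)) = k * n"
    using degree_mult_eq[OF p0 q0] eq by (simp add: degree_monom_eq)
  moreover have "order 0 (det (Q k)) \<le> degree (det (Q k))" by (rule order_degree[OF q0])
  moreover have "order 0 (char_poly A) \<le> degree (char_poly A)" by (rule order_degree[OF p0])
  ultimately have "order 0 (char_poly A) = n" using dm by linarith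
  hence "monom 1 n dvd char_poly A" using monom_1_dvd_iff[OF p0] by simp
  hence lo: "\<forall>i<n. coeff (char_poly A) i = 0" by (simp add: monom_1_dvd_iff')
  show ?thesis
  proof (rule poly_eqI)
    fix i show "coeff (char_poly A) i = coeff (monom 1 n) i"
      using lo dm coeff_eq_0[of "char_poly A" i] by (cases "i < n"; cases "i = n") (auto simp: coeff_monom)
  qed
qed

lemma cycle_from_perm:
  assumes p: "p permutes {0..<n}" and i: "p i \<noteq> i" and arcs: "\<forall>x. p x \<noteq> x \<longrightarrow> P x (p x)"
  shows "\<exists>L. 2 \<le> L \<and> L \<le> card {x. p x \<noteq> x} \<and> has_k_cycle n P L"
proof -
  define T where "T = {x. p x \<noteq> x}"
  have Tsub: "T \<subseteq> {0..<n}" using p by (auto simp: T_def dest: permutes_not_in)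
  have finT: "finite T" using Tsub finite_subset by blast
  have pT: "p permutes T" using p unfolding T_def permutes_def by simp
  have perm: "permutation p" using p by (auto simp: permutation_permutes)
  have hi: "i \<in> orbit p i" by (rule permutation_self_in_orbit[OF perm])
  define L where "L = funpow_dist1 p i i"
  define vs where "vs = map (\<lambda>j. (p^^j) i) [0..<L]"
  have pL: "(p^^L) i = i" unfolding L_def by (rule funpow_dist1_prop[OF hi])
  have injL: "inj_on (\<lambda>j. (p^^j) i) {0..<L}" unfolding L_def by (rule inj_on_funpow_dist1[OF hi])
  have dist: "distinct vs" unfolding vs_def distinct_map using injL by simp
  have iT: "i \<in> T" using i by (simp add: T_def)
  have setT: "set vs \<subseteq> T"
    using permutes_orbit_subset[OF pT iT] funpow_in_orbit[OF hi] unfolding vs_def by auto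
  have lenL: "length vs = L" by (simp add: vs_def)
  have cardL: "L \<le> card T" using card_mono[OF finT setT] distinct_card[OF dist] lenL by simp
  have L1: "L \<noteq> 1" using pL i by auto
  have L2: "2 \<le> L" using L1 unfolding L_def by simp
  have "has_k_cycle n P L"
    unfolding has_k_cycle_def
  proof (intro exI[of _ vs] conjI allI impI)
    show "length vs = L" by (rule lenL)
    show "1 \<le> L" using L2 by simp
    show "distinct vs" by (rule dist)
    show "set vs \<subseteq> {..<n}" using setT Tsub by auto
    fix j assume j: "j < L"
    have xT: "(p^^j) i \<in> T" using setT j unfolding vs_def by auto
    hence arc: "P ((p^^j) i) ((p^^(Suc j)) i)" using arcs unfolding T_def by auto
    have "vs ! ((j + 1) mod L) = (p^^(Suc j)) i"
    proof (cases "Suc j < L")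
      case True then show ?thesis by (simp add: vs_def)
    next
      case False then have "Suc j = L" using j by simp
      then show ?thesis using pL L2 by (simp add: vs_def)
    qed
    then show "P (vs ! j) (vs ! ((j + 1) mod L))" using arc j by (simp add: vs_def)
  qed
  then show ?thesis using L2 cardL unfolding T_def by blast
qed


theorem corollary4p5:
  fixes n m :: nat and P :: "nat \<Rightarrow> nat \<Rightarrow> bool"
  assumes "num_nonzero_diag n P = m"
    and "m \<ge> 2"
    and "\<forall>k. 2 \<le> k \<and> k \<le> m \<longrightarrow> \<not> has_k_cycle n P k"
  shows "\<not> potentially_nilpotent TYPE('a::field) n P"
proof
  assume "potentially_nilpotent TYPE('a::field) n P"
  then obtain A :: "'a mat" where R: "realization n P A" and N: "nilpotent_mat n A"
    unfolding potentially_nilpotent_def by blast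
  have A: "A \<in> carrier_mat n n" and RP: "\<And>i j. i < n \<Longrightarrow> j < n \<Longrightarrow> A $$ (i, j) \<noteq> 0 \<longleftrightarrow> P i j"
    using R unfolding realization_def by auto
  obtain k where "A ^\<^sub>m k = 0\<^sub>m n n" using N unfolding nilpotent_mat_def by blast
  from char_poly_nilp[OF A this] have cp: "char_poly A = monom 1 n" .
  define S where "S = {i. i < n \<and> P i i}"
  have cardS: "card S = m" using assms(1) unfolding num_nonzero_diag_def S_def by simp
  have Ssub: "S \<subseteq> {0..<n}" unfolding S_def by auto
  have mn: "m \<le> n" using card_mono[OF _ Ssub] cardS by simp
  define C where "C = char_poly_matrix A"
  have Cc: "C \<in> carrier_mat n n" using A by (simp add: C_def)
  have Cij: "C $$ (i,j) = (if i = j then [:0,1:] else 0) + [:- A $$ (i,j):]" if "i < n" "j < n" for i j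
    using that A unfolding C_def char_poly_matrix_def by auto
  define f where "f = (\<lambda>p. signof p * (\<Prod>i = 0..<n. C $$ (i, p i)) :: 'a poly)"
  have detC: "char_poly A = (\<Sum>p | p permutes {0..<n}. f p)"
    unfolding char_poly_def C_def[symmetric] f_def by (rule det_def'[OF Cc])
  have other: "coeff (f p) (n - m) = 0" if p: "p permutes {0..<n}" and pid: "p \<noteq> id" for p
  proof (cases "(\<Prod>i = 0..<n. C $$ (i, p i)) = 0")
    case True then show ?thesis unfolding f_def by (simp only: True mult_zero_right coeff_0)
  next
    case False
    have pin: "\<And>i. i < n \<Longrightarrow> p i < n" using p by (simp add: permutes_in_image)
    have arcs: "\<forall>x. p x \<noteq> x \<longrightarrow> P x (p x)"
    proof (intro allI impI)
      fix x assume px: "p x \<noteq> x"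
      hence xn: "x < n" using p permutes_not_in[of p "{0..<n}" x] by auto
      have "C $$ (x, p x) \<noteq> 0" using False xn by auto
      hence "A $$ (x, p x) \<noteq> 0" using Cij[OF xn pin[OF xn]] px by auto
      then show "P x (p x)" using RP xn pin[OF xn] by blast
    qed
    obtain i where i: "p i \<noteq> i" using pid by (metis eq_id_iff)
    obtain L where L: "2 \<le> L" "L \<le> card {x. p x \<noteq> x}" "has_k_cycle n P L"
      using cycle_from_perm[where p=p and n=n and i=i and P=P, OF p i arcs] by blast
    have Lm: "m < L" using assms(3) L by (meson not_le_imp_less)
    define T where "T = {x. p x \<noteq> x}"
    have Tsub: "T \<subseteq> {0..<n}" using p by (auto simp: T_def dest: permutes_not_in)
    have "degree (\<Prod>i = 0..<n. C $$ (i, p i)) \<le> (\<Sum>i = 0..<n. degree (C $$ (i, p i)))"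
      using degree_prod_sum_le[of "{0..<n}" "\<lambda>i. C $$ (i, p i)"] by (simp add: o_def)
    also have "\<dots> \<le> (\<Sum>i = 0..<n. if i \<in> T then 0 else 1)"
    proof (rule sum_mono)
      fix x assume "x \<in> {0..<n}"
      hence xn: "x < n" by simp
      show "degree (C $$ (x, p x)) \<le> (if x \<in> T then 0 else 1)"
      proof (cases "x \<in> T")
        case True then show ?thesis using Cij[OF xn pin[OF xn]] by (auto simp: T_def)
      next
        case False
        then have "p x = x" by (simp add: T_def)
        then show ?thesis using Cij[OF xn xn] False by simp
      qed
    qed
    also have "\<dots> = card ({0..<n} - T)"
      unfolding sum.If_cases[OF finite_atLeastLessThan] by (simp add: Diff_eq)
    also have "\<dots> = n - card T" using Tsub by (simp add: card_Diff_subset finite_subset)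
    finally have dg0: "degree (\<Prod>i = 0..<n. C $$ (i, p i)) \<le> n - card T" .
    have cT: "m < card T" using L(2) Lm unfolding T_def by linarith
    have "card T \<le> n" using card_mono[OF _ Tsub] by simp
    hence dg: "degree (\<Prod>i = 0..<n. C $$ (i, p i)) < n - m" using dg0 cT by linarith
    then show ?thesis unfolding f_def by (intro coeff_eq_0) (simp add: degree_signof_mult)
  qed
  have idc: "coeff (f id) (n - m) \<noteq> 0"
  proof -
    have diag: "C $$ (i, i) = (if i \<in> S then [:- A $$ (i,i), 1:] else monom 1 1)" if "i < n" for i
    proof -
      show ?thesis
      proof (cases "i \<in> S")
        case True then show ?thesis using Cij[OF that that] by simp
      next
        case False
        then have "A $$ (i,i) = 0" using RP[OF that that] that unfolding S_def by blast
        then show ?thesis using Cij[OF that that] False by (simp add: x_as_monom)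
      qed
    qed
    have "(\<Prod>i = 0..<n. C $$ (i, i)) = (\<Prod>i\<in>{0..<n} - S. C $$ (i, i)) * (\<Prod>i\<in>S. C $$ (i, i))"
      by (rule prod.subset_diff[OF Ssub]) simp
    also have "(\<Prod>i\<in>{0..<n} - S. C $$ (i, i)) = (\<Prod>i\<in>{0..<n} - S. monom 1 1)"
      by (rule prod.cong) (auto simp: diag)
    also have "\<dots> = monom 1 (n - m)"
      using Ssub cardS by (simp add: card_Diff_subset finite_subset mult_monom monom_altdef power_mult)
    also have "(\<Prod>i\<in>S. C $$ (i, i)) = (\<Prod>i\<in>S. [:- A $$ (i,i), 1:])"
      by (rule prod.cong) (use Ssub in \<open>auto simp: diag\<close>)
    finally have pe: "(\<Prod>i = 0..<n. C $$ (i, i)) = monom 1 (n - m) * (\<Prod>i\<in>S. [:- A $$ (i,i), 1:])" .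
    have "coeff (\<Prod>i\<in>S. [:- A $$ (i,i), 1:]) 0 = (\<Prod>i\<in>S. - A $$ (i,i))"
      by (simp add: poly_0_coeff_0[symmetric] poly_prod)
    also have "\<dots> \<noteq> 0"
    proof -
      have "finite S" using Ssub finite_subset by blast
      moreover have "\<forall>i\<in>S. - A $$ (i,i) \<noteq> 0" using RP by (auto simp: S_def)
      ultimately show ?thesis by simp
    qed
    finally show ?thesis unfolding f_def using pe by (simp add: coeff_monom_mult)
  qed
  have "coeff (char_poly A) (n - m) = (\<Sum>p | p permutes {0..<n}. coeff (f p) (n - m))"
    unfolding detC by (rule coeff_sum)
  also have "\<dots> = coeff (f id) (n - m) + (\<Sum>p \<in> {p. p permutes {0..<n}} - {id}. coeff (f p) (n - m))"
    by (rule sum.remove) (auto simp: permutes_id finite_permutations)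
  also have "(\<Sum>p \<in> {p. p permutes {0..<n}} - {id}. coeff (f p) (n - m)) = 0"
    by (rule sum.neutral) (auto intro: other)
  finally have "coeff (char_poly A) (n - m) \<noteq> 0" using idc by (simp add: id_def)
  moreover have "coeff (char_poly A) (n - m) = 0" unfolding cp using assms(2) mn by (simp add: coeff_monom)
  ultimately show False by simp
qed
end
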